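(* Let $T$ be a minimal tree. (i) If $T=[[A,B],C]$ for rooted trees $A,B,C$, then $\max\{|A|,|B|\}\le |C|$. (ii) If $T=[[A,B],[[D,E],C]]$ for rooted trees $A,B,C,D,E$, then $\max\{|D|,|E|\}\le\min\{|A|,|B|\}$.
   Context: A rooted tree $T$ is a finite tree with a distinguished vertex, its root; its order $|T|$ is its number of vertices. For vertices $u,v$, the infimum of $u$ and $v$ is the vertex common to the path from $u$ to the root and the path from $v$ to the root that is furthest from the root. A set $X\subseteq V(T)$ is infima closed if the infimum of any two elements of $X$ lies in $X$. $I(T)$ denotes the number of nonempty infima closed subsets of $V(T)$. For $n\ge1$, $m_n=\min\{I(T): |T|=n\}$; a rooted tree $T$ with $I(T)=m_{|T|}$ is called minimal. $[B_1,\dots,B_k]$ denotes the rooted tree whose root has exactly $k$ children, the branches (subtrees of descendants) rooted at these children being $B_1,\dots,B_k$. *)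

theory Defs
  imports Main
begin

text \<open>Rooted trees: a node with a (finite) list of branches.  The order of the
  children is irrelevant for everything below.\<close>
datatype rtree = Node "rtree list"

text \<open>Vertices of a rooted tree, encoded as paths (lists of child indices) from the root;
  the root is the empty path.\<close>
function vertices :: "rtree \<Rightarrow> nat list set" where
  "vertices (Node ts) =
     insert [] (\<Union>(i, t) \<in> set (zip [0..<length ts] ts). (Cons i) ` vertices t)"
  by pat_completeness auto
termination
  by (relation "measure size") (auto dest!: set_zip_rightD simp: le_imp_less_Suc size_list_estimation')

definition order :: "rtree \<Rightarrow> nat" where
  "order T = card (vertices T)"

text \<open>Infimum of two vertices: the common ancestor furthest from the root,
  i.e. the longest common prefix of the two paths.\<close>
fun inf_v :: "nat list \<Rightarrow> nat list \<Rightarrow> nat list" where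
  "inf_v (x # xs) (y # ys) = (if x = y then x # inf_v xs ys else [])"
| "inf_v _ _ = []"

definition infima_closed :: "nat list set \<Rightarrow> bool" where
  "infima_closed X \<longleftrightarrow> (\<forall>u\<in>X. \<forall>v\<in>X. inf_v u v \<in> X)"

definition I :: "rtree \<Rightarrow> nat" where
  "I T = card {X. X \<subseteq> vertices T \<and> X \<noteq> {} \<and> infima_closed X}"

definition m :: "nat \<Rightarrow> nat" where
  "m n = Min {I T | T. order T = n}"

definition minimal :: "rtree \<Rightarrow> bool" where
  "minimal T \<longleftrightarrow> I T = m (order T)"

end

theory Submission
  imports Defs
begin


lemma vertices_snoc: "vertices (Node (xs @ [t])) = vertices (Node xs) \<union> (Cons (length xs)) ` vertices t"
  by (auto simp: zip_append)

lemma vertices_Nil: "vertices (Node []) = {[]}" by simp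

lemma vertices_bin: "vertices (Node [X, Y]) = insert [] ((Cons 0) ` vertices X \<union> (Cons 1) ` vertices Y)"
  using vertices_snoc[of "[X]" Y] vertices_snoc[of "[]" X] by auto

lemma vertices_un: "vertices (Node [X]) = insert [] ((Cons 0) ` vertices X)"
  using vertices_snoc[of "[]" X] by auto

lemma finite_vertices: "finite (vertices T)"
proof (induction T)
  case (Node ts)
  then show ?case by (auto dest: set_zip_rightD)
qed

lemma root_in: "[] \<in> vertices T" by (cases T) auto

lemma hd_lt: "u \<in> vertices (Node xs) \<Longrightarrow> u \<noteq> [] \<Longrightarrow> hd u < length xs"
  by (auto dest: set_zip_leftD)

lemma order_ge1: "order T \<ge> 1"
  unfolding order_def using root_in finite_vertices by (metis One_nat_def Suc_leI card_gt_0_iff empty_iff)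

lemma order_bin: "order (Node [X, Y]) = order X + order Y + 1"
proof -
  have "card (insert [] ((Cons 0) ` vertices X \<union> (Cons 1) ` vertices Y)) = card ((Cons 0) ` vertices X \<union> (Cons 1) ` vertices Y) + 1"
    by (subst card_insert_disjoint) (auto simp: finite_vertices)
  also have "card ((Cons 0) ` vertices X \<union> (Cons 1) ` vertices Y) = card ((Cons 0) ` vertices X) + card ((Cons 1) ` vertices Y)"
    by (rule card_Un_disjoint) (auto simp: finite_vertices)
  also have "\<dots> = order X + order Y" unfolding order_def
    by (simp add: card_image)
  finally show ?thesis unfolding order_def by (simp add: vertices_bin)
qed

lemma order_un: "order (Node [X]) = order X + 1"
  unfolding order_def vertices_un
  by (subst card_insert_disjoint) (auto simp: finite_vertices card_image)

lemma inf_v_same: "inf_v v v = v" by (induction v) auto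

lemma del_exists: "ts \<noteq> [] \<Longrightarrow> \<exists>v T'. v \<in> vertices (Node ts) \<and> vertices T' = vertices (Node ts) - {v}"
proof (induction "Node ts" arbitrary: ts rule: measure_induct_rule[where f=size])
  case (less ts)
  obtain xs t where ts: "ts = xs @ [t]" using less.prems by (metis rev_exhaust)
  obtain us where t: "t = Node us" by (cases t)
  show ?case
  proof (cases "us = []")
    case True
    have "[length xs] \<notin> vertices (Node xs)" using hd_lt by fastforce
    then have "vertices (Node xs) = vertices (Node ts) - {[length xs]}"
      using ts t True by (auto simp: vertices_snoc)
    moreover have "[length xs] \<in> vertices (Node ts)" using ts t True by (simp add: vertices_snoc)
    ultimately show ?thesis by blast
  next
    case False
    have "size t < size (Node ts)" using ts by (simp add: size_list_estimation')
    then obtain v' t' where v': "v' \<in> vertices t" "vertices t' = vertices t - {v'}"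
      using less.hyps[of us] t False \<open>size t < size (Node ts)\<close> by blast
    have nin: "length xs # v' \<notin> vertices (Node xs)" using hd_lt by fastforce
    have "vertices (Node (xs @ [t'])) = vertices (Node ts) - {length xs # v'}"
      using ts v' nin by (auto simp: vertices_snoc)
    moreover have "length xs # v' \<in> vertices (Node ts)" using ts v' by (simp add: vertices_snoc)
    ultimately show ?thesis by blast
  qed
qed



definition fam :: "nat list set \<Rightarrow> nat list set set" where
  "fam V = {X. X \<subseteq> V \<and> X \<noteq> {} \<and> infima_closed X}"
definition fam0 :: "nat list set \<Rightarrow> nat list set set" where
  "fam0 V = {X. X \<subseteq> V \<and> infima_closed X}"

lemma I_fam: "I T = card (fam (vertices T))" unfolding I_def fam_def by simp

lemma finite_fam: "finite V \<Longrightarrow> finite (fam V)"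
  unfolding fam_def by (rule finite_subset[of _ "Pow V"]) auto
lemma finite_fam0: "finite V \<Longrightarrow> finite (fam0 V)"
  unfolding fam0_def by (rule finite_subset[of _ "Pow V"]) auto

lemma card_fam0: "finite V \<Longrightarrow> card (fam0 V) = card (fam V) + 1"
proof -
  assume f: "finite V"
  have "fam0 V = insert {} (fam V)" unfolding fam0_def fam_def infima_closed_def by auto
  moreover have "{} \<notin> fam V" unfolding fam_def by auto
  ultimately show ?thesis using finite_fam[OF f] by simp
qed

lemma I_le_pow: "I T \<le> 2 ^ order T"
proof -
  have "fam (vertices T) \<subseteq> Pow (vertices T)" unfolding fam_def by auto
  then have "card (fam (vertices T)) \<le> card (Pow (vertices T))"
    by (rule card_mono[rotated]) (simp add: finite_vertices)
  then show ?thesis unfolding I_fam order_def by (simp add: card_Pow finite_vertices)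
qed

lemma I_del: assumes "v \<in> vertices T" "vertices T' = vertices T - {v}"
  shows "I T' < I T" "order T' + 1 = order T"
proof -
  have "fam (vertices T') \<subset> fam (vertices T)"
  proof
    show "fam (vertices T') \<subseteq> fam (vertices T)" using assms unfolding fam_def by auto
    have "{v} \<in> fam (vertices T)" using assms unfolding fam_def infima_closed_def by (auto simp: inf_v_same)
    moreover have "{v} \<notin> fam (vertices T')" using assms unfolding fam_def by auto
    ultimately show "fam (vertices T') \<noteq> fam (vertices T)" by blast
  qed
  then show "I T' < I T" unfolding I_fam by (rule psubset_card_mono[OF finite_fam[OF finite_vertices]])
  show "order T' + 1 = order T" unfolding order_def using assms finite_vertices
    by (metis card_Diff1_less card_Suc_Diff1 Suc_eq_plus1)
qed

lemma closed_Cons: "infima_closed ((Cons a) ` S) \<longleftrightarrow> infima_closed S"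
  unfolding infima_closed_def by auto

lemma closed_root: "infima_closed (insert [] ((Cons (0::nat)) ` S1 \<union> (Cons 1) ` S2)) \<longleftrightarrow> infima_closed S1 \<and> infima_closed S2"
  (is "infima_closed ?S \<longleftrightarrow> _")
proof
  assume h: "infima_closed ?S"
  show "infima_closed S1 \<and> infima_closed S2" unfolding infima_closed_def
  proof (intro conjI ballI)
    fix u v assume "u \<in> S1" "v \<in> S1"
    then have "inf_v (0#u) (0#v) \<in> ?S" using h unfolding infima_closed_def by blast
    then show "inf_v u v \<in> S1" by auto
  next
    fix u v assume "u \<in> S2" "v \<in> S2"
    then have "inf_v (1#u) (1#v) \<in> ?S" using h unfolding infima_closed_def by blast
    then show "inf_v u v \<in> S2" by auto
  qed
next
  assume "infima_closed S1 \<and> infima_closed S2"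
  then show "infima_closed ?S" unfolding infima_closed_def by auto
qed

lemma fam_bin:
  "fam (insert [] ((Cons 0) ` VX \<union> (Cons 1) ` VY)) =
     (\<lambda>(S1,S2). insert [] ((Cons 0) ` S1 \<union> (Cons 1) ` S2)) ` (fam0 VX \<times> fam0 VY)
     \<union> (image (Cons 0)) ` fam VX \<union> (image (Cons 1)) ` fam VY" (is "?L = ?R1 \<union> ?R2 \<union> ?R3")
proof
  show "?R1 \<union> ?R2 \<union> ?R3 \<subseteq> ?L"
    unfolding fam_def fam0_def by (auto simp: closed_root closed_root[simplified] closed_Cons)
  show "?L \<subseteq> ?R1 \<union> ?R2 \<union> ?R3"
  proof
    fix S assume S: "S \<in> ?L"
    define S1 where "S1 = {u. 0 # u \<in> S}"
    define S2 where "S2 = {u. 1 # u \<in> S}"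
    have Ssub: "S \<subseteq> insert [] ((Cons 0) ` VX \<union> (Cons 1) ` VY)" and cl: "infima_closed S" and ne: "S \<noteq> {}"
      using S unfolding fam_def by auto
    have S1sub: "S1 \<subseteq> VX" using Ssub unfolding S1_def by auto
    have S2sub: "S2 \<subseteq> VY" using Ssub unfolding S2_def by auto
    show "S \<in> ?R1 \<union> ?R2 \<union> ?R3"
    proof (cases "[] \<in> S")
      case True
      have eq: "S = insert [] ((Cons 0) ` S1 \<union> (Cons 1) ` S2)"
        using True Ssub unfolding S1_def S2_def by auto
      then have "infima_closed S1 \<and> infima_closed S2" using cl closed_root by metis
      then have "(S1, S2) \<in> fam0 VX \<times> fam0 VY" using S1sub S2sub unfolding fam0_def by auto
      then show ?thesis using eq by blast
    next
      case False
      have not_both: "\<not> (S1 \<noteq> {} \<and> S2 \<noteq> {})"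
      proof
        assume "S1 \<noteq> {} \<and> S2 \<noteq> {}"
        then obtain u w where "0 # u \<in> S" "1 # w \<in> S" unfolding S1_def S2_def by auto
        then have "inf_v (0 # u) (1 # w) \<in> S" using cl unfolding infima_closed_def by blast
        then show False using False by simp
      qed
      show ?thesis
      proof (cases "S2 = {}")
        case True
        have eq: "S = (Cons 0) ` S1" using False True Ssub unfolding S1_def S2_def by auto
        then have "S1 \<in> fam VX" using cl ne S1sub closed_Cons unfolding fam_def by auto
        then show ?thesis using eq by blast
      next
        case F2: False
        then have "S1 = {}" using not_both by blast
        have eq: "S = (Cons 1) ` S2" using False \<open>S1 = {}\<close> Ssub unfolding S1_def S2_def by auto
        then have "S2 \<in> fam VY" using cl ne S2sub closed_Cons unfolding fam_def by auto
        then show ?thesis using eq by blast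
      qed
    qed
  qed
qed

lemma proj0: "{u. 0 # u \<in> insert [] ((Cons (0::nat)) ` a \<union> (Cons 1) ` b)} = a" by auto
lemma proj1: "{u. 1 # u \<in> insert [] ((Cons (0::nat)) ` a \<union> (Cons 1) ` b)} = b" by auto

lemma card_fam_bin:
  assumes fX: "finite VX" and fY: "finite VY"
  shows "card (fam (insert [] ((Cons 0) ` VX \<union> (Cons 1) ` VY))) + 3 = (card (fam VX) + 2) * (card (fam VY) + 2)"
proof -
  let ?f = "\<lambda>(S1,S2). insert [] ((Cons 0) ` S1 \<union> (Cons 1) ` S2)"
  let ?R1 = "?f ` (fam0 VX \<times> fam0 VY)"
  let ?R2 = "(image (Cons 0)) ` fam VX"
  let ?R3 = "(image (Cons 1)) ` fam VY"
  have inj1: "inj_on ?f (fam0 VX \<times> fam0 VY)"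
  proof (rule inj_onI)
    fix p q assume "p \<in> fam0 VX \<times> fam0 VY" "q \<in> fam0 VX \<times> fam0 VY" and h0: "?f p = ?f q"
    obtain a b where p: "p = (a,b)" by (cases p)
    obtain c d where q: "q = (c,d)" by (cases q)
    have h: "insert [] ((Cons (0::nat)) ` a \<union> (Cons 1) ` b) = insert [] ((Cons 0) ` c \<union> (Cons 1) ` d)"
      using h0 unfolding p q by (simp only: prod.case)
    have "a = c" using proj0[of a b] proj0[of c d] h by (simp only:)
    moreover have "b = d" using proj1[of a b] proj1[of c d] h by (simp only:)
    ultimately show "p = q" using p q by simp
  qed
  have injC: "inj_on (image (Cons k)) A" for k :: nat and A :: "nat list set set"
    by (rule inj_onI) (simp add: inj_image_eq_iff)
  have c1: "card ?R1 = card (fam0 VX) * card (fam0 VY)"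
    using card_image[OF inj1] card_cartesian_product[of "fam0 VX" "fam0 VY"] by (simp only:)
  have c2: "card ?R2 = card (fam VX)" using card_image[OF injC] by blast
  have c3: "card ?R3 = card (fam VY)" using card_image[OF injC] by blast
  have fin: "finite ?R1" "finite ?R2" "finite ?R3"
    using finite_fam0[OF fX] finite_fam0[OF fY] finite_fam[OF fX] finite_fam[OF fY] by auto
  have d12: "?R1 \<inter> ?R2 = {}"
  proof (rule ccontr)
    assume "?R1 \<inter> ?R2 \<noteq> {}"
    then obtain S where S1: "S \<in> ?R1" and "S \<in> ?R2" by blast
    then obtain A where "S = (Cons 0) ` A" by blast
    then have "[] \<notin> S" by blast
    moreover have "[] \<in> S" using S1 by blast
    ultimately show False by blast
  qed
  have d3: "(?R1 \<union> ?R2) \<inter> ?R3 = {}"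
  proof (rule ccontr)
    assume "(?R1 \<union> ?R2) \<inter> ?R3 \<noteq> {}"
    then obtain S where SI: "S \<in> (?R1 \<union> ?R2) \<inter> ?R3" by (meson ex_in_conv)
    have S12: "S \<in> ?R1 \<union> ?R2" using SI by (rule IntD1)
    have S3: "S \<in> ?R3" using SI by (rule IntD2)
    from S3 obtain B where B: "B \<in> fam VY" "S = (Cons 1) ` B" by (rule imageE) simp
    then have "B \<noteq> {}" unfolding fam_def by simp
    then obtain w where "w \<in> B" by (meson ex_in_conv)
    then have w: "1 # w \<in> S" using B by blast
    have nil: "[] \<notin> S" using B by blast
    from S12 show False
    proof
      assume "S \<in> ?R1" then show False using nil by blast
    next
      assume "S \<in> ?R2" then obtain A where "S = (Cons 0) ` A" by blast
      then show False using w by auto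
    qed
  qed
  have "card (?R1 \<union> ?R2 \<union> ?R3) = card ?R1 + card ?R2 + card ?R3"
    using fin d12 d3 by (simp only: card_Un_disjoint finite_Un)
  then have "card (fam (insert [] ((Cons 0) ` VX \<union> (Cons 1) ` VY))) = card (fam0 VX) * card (fam0 VY) + card (fam VX) + card (fam VY)"
    using c1 c2 c3 by (simp only: fam_bin)
  then have "card (fam (insert [] ((Cons 0) ` VX \<union> (Cons 1) ` VY))) = (card (fam VX) + 1) * (card (fam VY) + 1) + card (fam VX) + card (fam VY)"
    by (simp only: card_fam0[OF fX] card_fam0[OF fY])
  then show ?thesis by (simp add: algebra_simps)
qed

lemma I_bin: "I (Node [X, Y]) + 3 = (I X + 2) * (I Y + 2)"
  unfolding I_fam vertices_bin by (rule card_fam_bin[OF finite_vertices finite_vertices])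



lemma arith_mono:
  fixes x b y e c a b' d e' :: int
  assumes "2 \<le> x" "x \<le> a" "2 \<le> b" "b \<le> b'" "2 \<le> y" "y \<le> d" "2 \<le> e" "e \<le> e'" "2 \<le> c"
  shows "(x*b-1)*((y*e-1)*c-1) \<le> (a*b'-1)*((d*e'-1)*c-1)"
proof -
  have "x*b \<le> a*b'" using assms by (intro mult_mono) auto
  have "y*e \<le> d*e'" using assms by (intro mult_mono) auto
  have "x*b \<ge> 4" using assms mult_mono[of 2 x 2 b] by auto
  have "y*e \<ge> 4" using assms mult_mono[of 2 y 2 e] by auto
  have "(y*e-1)*c \<le> (d*e'-1)*c" using \<open>y*e \<le> d*e'\<close> assms by (intro mult_right_mono) auto
  have "(y*e-1)*c \<ge> 6" using \<open>y*e \<ge> 4\<close> assms mult_mono[of 3 "y*e-1" 2 c] by auto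
  show ?thesis
    using \<open>x*b \<le> a*b'\<close> \<open>x*b \<ge> 4\<close> \<open>(y*e-1)*c \<le> (d*e'-1)*c\<close> \<open>(y*e-1)*c \<ge> 6\<close>
    by (intro mult_mono) auto
qed

lemma arith1:
  fixes x y b e c :: int
  assumes "2 \<le> x" "x < y" "2 \<le> b" "e \<le> b" "2 \<le> e" "2 \<le> c"
  shows "(y*b-1)*((x*e-1)*c-1) < (x*b-1)*((y*e-1)*c-1)"
proof -
  have id: "(x*b-1)*((y*e-1)*c-1) - (y*b-1)*((x*e-1)*c-1) = (y-x)*(b + c*(b-e))"
    by (simp add: algebra_simps)
  have "c*(b-e) \<ge> 0" using assms by simp
  then have "(y-x)*(b + c*(b-e)) > 0" using assms \<open>c*(b-e) \<ge> 0\<close> by (intro mult_pos_pos) linarith+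
  then show ?thesis using id by linarith
qed

lemma arith2:
  fixes x y b e c :: int
  assumes "2 \<le> x" "x < y" "2 \<le> b" "b < e" "2 \<le> c"
  shows "(y*e-1)*((x*b-1)*c-1) < (x*b-1)*((y*e-1)*c-1)"
proof -
  have id: "(x*b-1)*((y*e-1)*c-1) - (y*e-1)*((x*b-1)*c-1) = y*e - x*b"
    by (simp add: algebra_simps)
  have "x*b < y*e" using assms by (intro mult_strict_mono) auto
  then show ?thesis using id by linarith
qed

lemma arith0:
  fixes pA pB pC pC' :: int
  assumes "2 \<le> pC'" "pC' < pA" "2 \<le> pB" "pC' \<le> pC"
  shows "(pC'*pB-1)*pA < (pA*pB-1)*pC"
proof -
  have "pA*pB \<ge> 1" using assms mult_mono[of 1 pA 1 pB] by auto
  then have "(pA*pB-1)*pC' \<le> (pA*pB-1)*pC" using assms by (intro mult_left_mono) auto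
  moreover have "(pA*pB-1)*pC' - (pC'*pB-1)*pA = pA - pC'" by (simp add: algebra_simps)
  ultimately show ?thesis using assms by linarith
qed


lemma fin_vals: "finite {I T | T. order T = n}"
  by (rule finite_subset[of _ "{..2^n}"]) (auto intro: I_le_pow)

lemma m_le: "order T = n \<Longrightarrow> m n \<le> I T"
  unfolding m_def by (rule Min_le[OF fin_vals]) blast

lemma m_attained: assumes "order T0 = n" shows "\<exists>T. order T = n \<and> I T = m n"
proof -
  have "m n \<in> {I T | T. order T = n}" unfolding m_def
    using assms by (intro Min_in[OF fin_vals]) blast
  then obtain T where "m n = I T" "order T = n" by blast
  then show ?thesis by auto
qed

lemma exists_order: "n \<ge> 1 \<Longrightarrow> \<exists>T. order T = n"
proof (induction n)
  case 0 then show ?case by simp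
next
  case (Suc n)
  show ?case
  proof (cases "n = 0")
    case True
    have "order (Node []) = 1" unfolding order_def by simp
    then show ?thesis using True by auto
  next
    case False
    then obtain T where "order T = n" using Suc by auto
    then have "order (Node [T]) = Suc n" by (simp add: order_un)
    then show ?thesis by blast
  qed
qed

lemma m_step: assumes "n \<ge> 1" shows "m n < m (Suc n)"
proof -
  obtain T0 where "order T0 = Suc n" using exists_order[of "Suc n"] by auto
  then obtain T where T: "order T = Suc n" "I T = m (Suc n)" using m_attained by blast
  obtain ts where ts: "T = Node ts" by (cases T)
  have "ts \<noteq> []"
  proof
    assume "ts = []"
    then have "order T = 1" using ts unfolding order_def by simp
    then show False using T assms by simp
  qed
  then obtain v T' where v: "v \<in> vertices T" "vertices T' = vertices T - {v}"
    using del_exists ts by blast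
  have "I T' < I T" "order T' + 1 = order T" using I_del[OF v] by auto
  then have "m n \<le> I T'" using T m_le[of T' n] by simp
  then show ?thesis using \<open>I T' < I T\<close> T by simp
qed

lemma m_strict: "1 \<le> a \<Longrightarrow> a < b \<Longrightarrow> m a < m b"
proof (induction b)
  case 0 then show ?case by simp
next
  case (Suc b)
  show ?case
  proof (cases "a = b")
    case True then show ?thesis using m_step Suc by simp
  next
    case False
    then have "m a < m b" using Suc by simp
    also have "m b < m (Suc b)" using m_step Suc False by simp
    finally show ?thesis .
  qed
qed

lemma m_mono: "1 \<le> a \<Longrightarrow> a \<le> b \<Longrightarrow> m a \<le> m b"
  using m_strict by (cases "a = b") (auto intro: less_imp_le)

definition P :: "rtree \<Rightarrow> int" where "P X = int (I X) + 2"

lemma P_bin: "P (Node [X, Y]) = P X * P Y - 1"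
proof -
  have "int (I (Node [X, Y]) + 3) = int ((I X + 2) * (I Y + 2))"
    by (simp only: I_bin)
  then show ?thesis unfolding P_def by (simp add: algebra_simps)
qed

lemma P_ge: "P X \<ge> 2" unfolding P_def by simp

lemma minimal_le: "minimal T \<Longrightarrow> order T' = order T \<Longrightarrow> P T \<le> P T'"
  unfolding minimal_def P_def using m_le by fastforce

lemma minimal_cong: "minimal T \<Longrightarrow> order T' = order T \<Longrightarrow> P T' = P T \<Longrightarrow> minimal T'"
  unfolding minimal_def P_def by simp

lemma rep: "\<exists>X'. order X' = order X \<and> I X' = m (order X)"
  using m_attained by blast

lemma P_rep_le: "order X' = order X \<Longrightarrow> I X' = m (order X) \<Longrightarrow> P X' \<le> P X"
  unfolding P_def using m_le[of X "order X"] by simp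

lemma P_rep_less: "order X' = order X \<Longrightarrow> I X' = m (order X) \<Longrightarrow> order X < order Y \<Longrightarrow> P X' < P Y"
  unfolding P_def using m_le[of Y "order Y"] m_strict[of "order X" "order Y"] order_ge1[of X] by simp

lemma partI: assumes "minimal (Node [Node [A, B], C])" shows "order A \<le> order C"
proof (rule ccontr)
  assume "\<not> order A \<le> order C"
  then have lt: "order C < order A" by simp
  obtain C' where C': "order C' = order C" "I C' = m (order C)" using rep by blast
  have "P C' < P A" using P_rep_less[OF C' lt] .
  moreover have "P C' \<le> P C" using P_rep_le[OF C'] .
  ultimately have "(P C' * P B - 1) * P A < (P A * P B - 1) * P C"
    using P_ge by (intro arith0) auto
  moreover have "order (Node [Node [C', B], A]) = order (Node [Node [A, B], C])"
    using C' by (simp add: order_bin)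
  then have "P (Node [Node [A, B], C]) \<le> P (Node [Node [C', B], A])"
    using minimal_le[OF assms] by blast
  ultimately show False by (simp add: P_bin)
qed

lemma partII: assumes "minimal (Node [Node [A, B], Node [Node [D, E], C]])" shows "order D \<le> order A"
proof (rule ccontr)
  assume "\<not> order D \<le> order A"
  then have lt: "order A < order D" by simp
  obtain A' where A': "order A' = order A" "I A' = m (order A)" using rep by blast
  obtain B' where B': "order B' = order B" "I B' = m (order B)" using rep by blast
  obtain D' where D': "order D' = order D" "I D' = m (order D)" using rep by blast
  obtain E' where E': "order E' = order E" "I E' = m (order E)" using rep by blast
  have xy: "P A' < P D'" using P_rep_less[OF A', of D'] D' lt by simp
  have mono: "(P A' * P B' - 1) * ((P D' * P E' - 1) * P C - 1) \<le> (P A * P B - 1) * ((P D * P E - 1) * P C - 1)"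
    using P_ge P_rep_le[OF A'] P_rep_le[OF B'] P_rep_le[OF D'] P_rep_le[OF E'] by (intro arith_mono) auto
  have PT: "P (Node [Node [A, B], Node [Node [D, E], C]]) = (P A * P B - 1) * ((P D * P E - 1) * P C - 1) - 1"
    by (simp add: P_bin)
  show False
  proof (cases "order E \<le> order B")
    case True
    have "m (order E) \<le> m (order B)" using m_mono[OF order_ge1 True] .
    then have "P E' \<le> P B'" unfolding P_def using B' E' by simp
    then have "(P D' * P B' - 1) * ((P A' * P E' - 1) * P C - 1) < (P A' * P B' - 1) * ((P D' * P E' - 1) * P C - 1)"
      using P_ge xy by (intro arith1) auto
    moreover have "order (Node [Node [D', B'], Node [Node [A', E'], C]]) = order (Node [Node [A, B], Node [Node [D, E], C]])"
      using A' B' D' E' by (simp add: order_bin)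
    then have "P (Node [Node [A, B], Node [Node [D, E], C]]) \<le> P (Node [Node [D', B'], Node [Node [A', E'], C]])"
      using minimal_le[OF assms] by blast
    ultimately show False using mono PT by (simp add: P_bin)
  next
    case False
    then have lt2: "order B < order E" by simp
    have "P B' < P E'" using P_rep_less[OF B', of E'] E' lt2 by simp
    then have "(P D' * P E' - 1) * ((P A' * P B' - 1) * P C - 1) < (P A' * P B' - 1) * ((P D' * P E' - 1) * P C - 1)"
      using P_ge xy by (intro arith2) auto
    moreover have "order (Node [Node [D', E'], Node [Node [A', B'], C]]) = order (Node [Node [A, B], Node [Node [D, E], C]])"
      using A' B' D' E' by (simp add: order_bin)
    then have "P (Node [Node [A, B], Node [Node [D, E], C]]) \<le> P (Node [Node [D', E'], Node [Node [A', B'], C]])"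
      using minimal_le[OF assms] by blast
    ultimately show False using mono PT by (simp add: P_bin)
  qed
qed

theorem lemma3p2:
  fixes T :: rtree
  assumes "minimal T"
  shows "(\<forall>A B C. T = Node [Node [A, B], C] \<longrightarrow> max (order A) (order B) \<le> order C)
       \<and> (\<forall>A B C D E. T = Node [Node [A, B], Node [Node [D, E], C]] \<longrightarrow>
            max (order D) (order E) \<le> min (order A) (order B))"
proof (intro conjI allI impI)
  fix A B C assume T: "T = Node [Node [A, B], C]"
  have "order A \<le> order C" using partI assms T by simp
  moreover have "minimal (Node [Node [B, A], C])"
    using assms T by (rule_tac minimal_cong) (auto simp: order_bin P_bin ac_simps)
  then have "order B \<le> order C" using partI by blast
  ultimately show "max (order A) (order B) \<le> order C" by simp
next
  fix A B C D E assume T: "T = Node [Node [A, B], Node [Node [D, E], C]]"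
  have m1: "minimal (Node [Node [A, B], Node [Node [D, E], C]])" using assms T by simp
  have m2: "minimal (Node [Node [B, A], Node [Node [D, E], C]])"
    using m1 by (rule minimal_cong) (auto simp: order_bin P_bin ac_simps)
  have m3: "minimal (Node [Node [A, B], Node [Node [E, D], C]])"
    using m1 by (rule minimal_cong) (auto simp: order_bin P_bin ac_simps)
  have m4: "minimal (Node [Node [B, A], Node [Node [E, D], C]])"
    using m1 by (rule minimal_cong) (auto simp: order_bin P_bin ac_simps)
  show "max (order D) (order E) \<le> min (order A) (order B)"
    using partII[OF m1] partII[OF m2] partII[OF m3] partII[OF m4] by simp
qed

end
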